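(* Let $n,r$ be positive integers with $r^2\le n+r$. Then $k(n+r)\le k(n)+1$.
   Context: A system on $n$ elements is a triple $(\mathcal{F},w,s)$ where $\mathcal{F}=(F_1,\dots,F_m)$ is a collection of subsets of $[n]$, $w\in[0,1]^m$ with $\sum_i w_i=1$, and $s\in[0,1]^{m\times m\times n}$ with $\sum_p s_{ijp}=1$ for all $i,j$. It is intersecting if $s_{ijp}>0$ implies $p\in F_i\cap F_j$. It is balanced if for all $p\in[n]$, $\sum_{i,j} w_iw_js_{ijp}=1/n$. Its cardinality is the size of the largest set in $\mathcal{F}$. $k(n)$ is the minimum $k$ such that there exists a balanced intersecting system on $n$ elements with cardinality $k$. *)

theory Defs
  imports Main "HOL.Real"
begin

definition is_system :: "nat \<Rightarrow> nat \<Rightarrow> (nat \<Rightarrow> nat set) \<Rightarrow> (nat \<Rightarrow> real)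
    \<Rightarrow> (nat \<Rightarrow> nat \<Rightarrow> nat \<Rightarrow> real) \<Rightarrow> bool" where
  "is_system n m F w s \<longleftrightarrow>
     (\<forall>i\<in>{1..m}. F i \<subseteq> {1..n}) \<and>
     (\<forall>i\<in>{1..m}. 0 \<le> w i \<and> w i \<le> 1) \<and>
     (\<Sum>i=1..m. w i) = 1 \<and>
     (\<forall>i\<in>{1..m}. \<forall>j\<in>{1..m}. \<forall>p\<in>{1..n}. 0 \<le> s i j p \<and> s i j p \<le> 1) \<and>
     (\<forall>i\<in>{1..m}. \<forall>j\<in>{1..m}. (\<Sum>p=1..n. s i j p) = 1)"

definition intersecting :: "nat \<Rightarrow> nat \<Rightarrow> (nat \<Rightarrow> nat set)
    \<Rightarrow> (nat \<Rightarrow> nat \<Rightarrow> nat \<Rightarrow> real) \<Rightarrow> bool" where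
  "intersecting n m F s \<longleftrightarrow>
     (\<forall>i\<in>{1..m}. \<forall>j\<in>{1..m}. \<forall>p\<in>{1..n}. s i j p > 0 \<longrightarrow> p \<in> F i \<inter> F j)"

definition balanced :: "nat \<Rightarrow> nat \<Rightarrow> (nat \<Rightarrow> real)
    \<Rightarrow> (nat \<Rightarrow> nat \<Rightarrow> nat \<Rightarrow> real) \<Rightarrow> bool" where
  "balanced n m w s \<longleftrightarrow>
     (\<forall>p\<in>{1..n}. (\<Sum>i=1..m. \<Sum>j=1..m. w i * w j * s i j p) = 1 / real n)"

definition cardinality :: "nat \<Rightarrow> (nat \<Rightarrow> nat set) \<Rightarrow> nat" where
  "cardinality m F = Max ((\<lambda>i. card (F i)) ` {1..m})"

definition kfun :: "nat \<Rightarrow> nat" where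
  "kfun n = (LEAST k. \<exists>m F w s. is_system n m F w s \<and> intersecting n m F s \<and>
                          balanced n m w s \<and> cardinality m F = k)"

end

theory Submission
  imports Defs
begin

lemma sum_blocks:
  fixes g :: "nat \<Rightarrow> 'b::comm_monoid_add"
  shows "(\<Sum>a=1..m*r. g a) = (\<Sum>i=1..m. \<Sum>t=1..r. g ((i-1)*r+t))"
proof (induction m)
  case 0
  then show ?case by simp
next
  case (Suc m)
  have e1: "Suc m * r = m * r + r" by simp
  have f1: "(\<Sum>a=1..m*r + r. g a) = (\<Sum>a=1..m*r. g a) + (\<Sum>a=m*r+1..m*r+r. g a)"
    by (rule sum.ub_add_nat) simp
  have f2: "(\<Sum>a=m*r+1..m*r+r. g a) = (\<Sum>t=1..r. g (t + m*r))"
    using sum.shift_bounds_cl_nat_ivl[of g 1 "m*r" r] by (simp only: add.commute)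
  have f3: "(\<Sum>t=1..r. g (t + m*r)) = (\<Sum>t=1..r. g ((Suc m - 1)*r + t))"
    by (simp only: diff_Suc_1 add.commute)
  have f4: "(\<Sum>i=1..Suc m. \<Sum>t=1..r. g ((i-1)*r+t))
      = (\<Sum>i=1..m. \<Sum>t=1..r. g ((i-1)*r+t)) + (\<Sum>t=1..r. g ((Suc m - 1)*r + t))"
    by (rule sum.cl_ivl_Suc[THEN trans]) simp
  show ?case by (simp only: e1 f1 f2 f3 f4 Suc.IH)
qed

lemma IT:
  fixes r i t :: nat
  assumes "0 < r" "1 \<le> t" "t \<le> r" "1 \<le> i"
  shows "((i-1)*r+t-1) div r + 1 = i" "((i-1)*r+t-1) mod r + 1 = t"
proof -
  have e: "(i-1)*r+t-1 = (t-1) + (i-1)*r" using assms by simp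
  have lt: "t - 1 < r" using assms by simp
  have d: "((t-1) + (i-1)*r) div r = i-1"
    using div_mult_self1[of r "t-1" "i-1"] assms lt by simp
  have m: "((t-1) + (i-1)*r) mod r = t-1"
    using lt by simp
  show "((i-1)*r+t-1) div r + 1 = i" using e d assms by simp
  show "((i-1)*r+t-1) mod r + 1 = t" using e m assms by simp
qed


lemma sum_blocks1:
  fixes H :: "nat \<Rightarrow> nat \<Rightarrow> 'b::comm_monoid_add"
  assumes r: "0 < r"
  shows "(\<Sum>a=1..m*r. H ((a-1) div r + 1) ((a-1) mod r + 1)) = (\<Sum>i=1..m. \<Sum>t=1..r. H i t)"
proof -
  have "(\<Sum>a=1..m*r. H ((a-1) div r + 1) ((a-1) mod r + 1))
     = (\<Sum>i=1..m. \<Sum>t=1..r. H (((i-1)*r+t-1) div r + 1) (((i-1)*r+t-1) mod r + 1))"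
    by (rule sum_blocks)
  also have "\<dots> = (\<Sum>i=1..m. \<Sum>t=1..r. H i t)"
  proof (intro sum.cong refl)
    fix i t assume "i \<in> {1..m}" "t \<in> {1..r}"
    then have "((i-1)*r+t-1) div r + 1 = i" "((i-1)*r+t-1) mod r + 1 = t"
      using IT[OF r, of t i] by auto
    then show "H (((i-1)*r+t-1) div r + 1) (((i-1)*r+t-1) mod r + 1) = H i t" by simp
  qed
  finally show ?thesis .
qed

lemma trivial_system:
  assumes "0 < n"
  shows "is_system n 1 (\<lambda>_. {1..n}) (\<lambda>_. 1) (\<lambda>_ _ _. 1 / real n) \<and>
         intersecting n 1 (\<lambda>_. {1..n}) (\<lambda>_ _ _. 1 / real n) \<and>
         balanced n 1 (\<lambda>_. 1) (\<lambda>_ _ _. 1 / real n)"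
  using assms by (auto simp: is_system_def intersecting_def balanced_def)

lemma kfun_attained:
  assumes "0 < n"
  shows "\<exists>m F w s. is_system n m F w s \<and> intersecting n m F s \<and>
                          balanced n m w s \<and> cardinality m F = kfun n"
  unfolding kfun_def
  apply (rule LeastI_ex)
  using trivial_system[OF assms] by blast

lemma aux1: "(r::real) \<noteq> 0 \<Longrightarrow> r * (a / r * (b / r) * c * d) = a * b * c * (d / r)"
  by (simp add: field_simps power2_eq_square)

lemma aux2: "(a::real) / r * (b / r) * al = (a * (al / (r * r))) * b"
  by (simp add: field_simps)

lemma row_const:
  fixes al :: real
  assumes "t \<in> {1..r}"
  shows "(\<Sum>t'=1..r. if t = t' then 1 - al else 1) = real r - al"
proof -
  have "(\<Sum>t'=1..r. if t = t' then 1 - al else 1) = (\<Sum>t'=1..r. 1 - (if t = t' then al else 0))"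
    by (intro sum.cong refl) auto
  also have "\<dots> = real r - al"
    using assms by (simp add: sum_subtractf sum.delta)
  finally show ?thesis .
qed

lemma extend:
  fixes n r m :: nat and F :: "nat \<Rightarrow> nat set" and w :: "nat \<Rightarrow> real"
    and s :: "nat \<Rightarrow> nat \<Rightarrow> nat \<Rightarrow> real"
  assumes n: "0 < n" and r: "0 < r" and nr: "r^2 \<le> n + r"
    and sys: "is_system n m F w s" and int: "intersecting n m F s" and bal: "balanced n m w s"
  shows "\<exists>m' F' w' s'. is_system (n+r) m' F' w' s' \<and> intersecting (n+r) m' F' s' \<and>
           balanced (n+r) m' w' s' \<and> cardinality m' F' = cardinality m F + 1"
proof -
  define I where "I a = (a-1) div r + 1" for a :: nat
  define T where "T a = (a-1) mod r + 1" for a :: nat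
  define al where "al = real (r^2) / real (n+r)"
  define s0 where "s0 i j p = (if p \<le> n then s i j p else 0)" for i j p
  define S where "S i t j t' p = (if t = t' then (if p = n + t then al else 0) + (1-al) * s0 i j p
                                  else s0 i j p)" for i t j t' p
  define F' where "F' a = F (I a) \<union> {n + T a}" for a
  define w' where "w' a = w (I a) / real r" for a
  define s' where "s' a b p = S (I a) (T a) (I b) (T b) p" for a b p
  have Fsub: "\<And>i. i \<in> {1..m} \<Longrightarrow> F i \<subseteq> {1..n}"
    using sys unfolding is_system_def by blast
  have w01: "\<And>i. i \<in> {1..m} \<Longrightarrow> 0 \<le> w i \<and> w i \<le> 1"
    using sys unfolding is_system_def by blast
  have wsum: "(\<Sum>i=1..m. w i) = 1"
    using sys unfolding is_system_def by blast
  have s01: "\<And>i j p. i \<in> {1..m} \<Longrightarrow> j \<in> {1..m} \<Longrightarrow> p \<in> {1..n} \<Longrightarrow> 0 \<le> s i j p \<and> s i j p \<le> 1"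
    using sys unfolding is_system_def by blast
  have ssum: "\<And>i j. i \<in> {1..m} \<Longrightarrow> j \<in> {1..m} \<Longrightarrow> (\<Sum>p=1..n. s i j p) = 1"
    using sys unfolding is_system_def by blast
  have intr: "\<And>i j p. i \<in> {1..m} \<Longrightarrow> j \<in> {1..m} \<Longrightarrow> p \<in> {1..n} \<Longrightarrow> s i j p > 0 \<Longrightarrow> p \<in> F i \<inter> F j"
    using int unfolding intersecting_def by blast
  have balp: "\<And>p. p \<in> {1..n} \<Longrightarrow> (\<Sum>i=1..m. \<Sum>j=1..m. w i * w j * s i j p) = 1 / real n"
    using bal unfolding balanced_def by blast
  have al0: "0 \<le> al" unfolding al_def by simp
  have "real (r^2) \<le> real (n + r)" using nr by linarith
  then have al1: "al \<le> 1" unfolding al_def using n by (simp add: divide_le_eq_1)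
  have m1: "1 \<le> m"
  proof (rule ccontr)
    assume "\<not> 1 \<le> m" then have "m = 0" by simp
    then show False using wsum by simp
  qed
  have ITr: "I a \<in> {1..m} \<and> T a \<in> {1..r}" if "a \<in> {1..m*r}" for a
  proof -
    have "a - 1 < m * r" using that by auto
    then have "(a-1) div r < m" by (simp add: less_mult_imp_div_less)
    moreover have "(a-1) mod r < r" using r by simp
    ultimately show ?thesis unfolding I_def T_def by auto
  qed
  have blocks: "(\<Sum>a=1..m*r. H (I a) (T a)) = (\<Sum>i=1..m. \<Sum>t=1..r. H i t)"
    for H :: "nat \<Rightarrow> nat \<Rightarrow> real"
    unfolding I_def T_def by (rule sum_blocks1[OF r])
  have S01: "0 \<le> S i t j t' p \<and> S i t j t' p \<le> 1"
    if "i \<in> {1..m}" "j \<in> {1..m}" "p \<in> {1..n+r}" "t \<in> {1..r}" for i j t t' p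
  proof -
    have s0b: "0 \<le> s0 i j p \<and> s0 i j p \<le> 1"
      using s01[OF that(1,2)] that(3) unfolding s0_def by auto
    show ?thesis
    proof (cases "t = t'")
      case True
      show ?thesis
      proof (cases "p = n + t")
        case True
        then have "s0 i j p = 0" unfolding s0_def using that by auto
        then show ?thesis using `t = t'` True al0 al1 unfolding S_def by simp
      next
        case False
        have "(1 - al) * s0 i j p \<le> 1 * 1" using s0b al0 al1 by (intro mult_mono) auto
        then show ?thesis using `t = t'` False al0 al1 s0b unfolding S_def by simp
      qed
    next
      case False
      then show ?thesis using s0b unfolding S_def by simp
    qed
  qed
  have Srow: "(\<Sum>p=1..n+r. S i t j t' p) = 1"
    if "i \<in> {1..m}" "j \<in> {1..m}" "t \<in> {1..r}" "t' \<in> {1..r}" for i j t t'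
  proof -
    have split: "(\<Sum>p=1..n+r. S i t j t' p) = (\<Sum>p=1..n. S i t j t' p) + (\<Sum>p=n+1..n+r. S i t j t' p)"
      by (rule sum.ub_add_nat) simp
    have lo: "(\<Sum>p=1..n. S i t j t' p) = (\<Sum>p=1..n. (if t = t' then 1 - al else 1) * s i j p)"
      using that by (intro sum.cong refl) (auto simp: S_def s0_def)
    have hi: "(\<Sum>p=n+1..n+r. S i t j t' p) = (\<Sum>p=n+1..n+r. if p = n + t then (if t = t' then al else 0) else 0)"
      using that by (intro sum.cong refl) (auto simp: S_def s0_def)
    have hi2: "\<dots> = (if t = t' then al else 0)"
      using that by (simp add: sum.delta)
    show ?thesis
      unfolding split lo hi hi2 using ssum[OF that(1,2)]
      by (simp add: sum_distrib_left[symmetric])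
  qed
  have issys: "is_system (n+r) (m*r) F' w' s'"
    unfolding is_system_def
  proof (intro conjI ballI)
    fix a assume a: "a \<in> {1..m*r}"
    have "F (I a) \<subseteq> {1..n}" using Fsub ITr[OF a] by blast
    then show "F' a \<subseteq> {1..n+r}" using ITr[OF a] unfolding F'_def by auto
    show "0 \<le> w' a" using w01 ITr[OF a] unfolding w'_def by auto
    show "w' a \<le> 1" using w01 ITr[OF a] r unfolding w'_def
      by (auto simp: divide_le_eq_1 intro: order_trans[of _ 1])
  next
    have "(\<Sum>a=1..m*r. w' a) = (\<Sum>i=1..m. \<Sum>t=1..r. w i / real r)"
      unfolding w'_def by (rule blocks)
    also have "\<dots> = (\<Sum>i=1..m. w i)" using r by simp
    finally show "(\<Sum>a=1..m*r. w' a) = 1" using wsum by simp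
  next
    fix a b p assume a: "a \<in> {1..m*r}" and b: "b \<in> {1..m*r}" and p: "p \<in> {1..n+r}"
    show "0 \<le> s' a b p" "s' a b p \<le> 1"
      using S01[OF _ _ p _] ITr[OF a] ITr[OF b] unfolding s'_def by auto
  next
    fix a b assume a: "a \<in> {1..m*r}" and b: "b \<in> {1..m*r}"
    show "(\<Sum>p=1..n+r. s' a b p) = 1"
      unfolding s'_def using Srow ITr[OF a] ITr[OF b] by auto
  qed
  have isint: "intersecting (n+r) (m*r) F' s'"
    unfolding intersecting_def
  proof (intro ballI impI)
    fix a b p assume a: "a \<in> {1..m*r}" and b: "b \<in> {1..m*r}" and p: "p \<in> {1..n+r}"
      and pos: "s' a b p > 0"
    show "p \<in> F' a \<inter> F' b"
    proof (cases "T a = T b \<and> p = n + T a")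
      case True
      then show ?thesis unfolding F'_def by auto
    next
      case False
      have "s0 (I a) (I b) p > 0"
      proof (cases "T a = T b")
        case True
        then have "p \<noteq> n + T a" using False by auto
        then have "(1 - al) * s0 (I a) (I b) p > 0" using pos True unfolding s'_def S_def by simp
        then show ?thesis using al1 by (simp add: zero_less_mult_iff)
      next
        case False
        then show ?thesis using pos unfolding s'_def S_def by simp
      qed
      then have "p \<le> n" "s (I a) (I b) p > 0" unfolding s0_def by (auto split: if_splits)
      then have "p \<in> F (I a) \<inter> F (I b)" using intr ITr[OF a] ITr[OF b] p by auto
      then show ?thesis unfolding F'_def by auto
    qed
  qed
  have isbal: "balanced (n+r) (m*r) w' s'"
    unfolding balanced_def
  proof (intro ballI)
    fix p assume p: "p \<in> {1..n+r}"
    have inner: "(\<Sum>b=1..m*r. w i / real r * w' b * S i t (I b) (T b) p)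
        = (\<Sum>j=1..m. \<Sum>t'=1..r. w i / real r * (w j / real r) * S i t j t' p)" for i t
      unfolding w'_def by (rule blocks)
    have "(\<Sum>a=1..m*r. \<Sum>b=1..m*r. w' a * w' b * s' a b p)
        = (\<Sum>i=1..m. \<Sum>t=1..r. \<Sum>b=1..m*r. w i / real r * w' b * S i t (I b) (T b) p)"
      unfolding s'_def w'_def by (rule blocks)
    also have "\<dots> = (\<Sum>i=1..m. \<Sum>t=1..r. \<Sum>j=1..m. \<Sum>t'=1..r. w i / real r * (w j / real r) * S i t j t' p)"
      unfolding inner ..
    finally have eq: "(\<Sum>a=1..m*r. \<Sum>b=1..m*r. w' a * w' b * s' a b p)
        = (\<Sum>i=1..m. \<Sum>t=1..r. \<Sum>j=1..m. \<Sum>t'=1..r. w i / real r * (w j / real r) * S i t j t' p)" .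
    show "(\<Sum>a=1..m*r. \<Sum>b=1..m*r. w' a * w' b * s' a b p) = 1 / real (n+r)"
    proof (cases "p \<le> n")
      case True
      have pn: "p \<in> {1..n}" using p True by auto
      have "(\<Sum>i=1..m. \<Sum>t=1..r. \<Sum>j=1..m. \<Sum>t'=1..r. w i / real r * (w j / real r) * S i t j t' p)
          = (\<Sum>i=1..m. \<Sum>j=1..m. w i * w j * s i j p * ((real r - al) / real r))"
      proof (rule sum.cong[OF refl])
        fix i assume i: "i \<in> {1..m}"
        have "(\<Sum>t=1..r. \<Sum>j=1..m. \<Sum>t'=1..r. w i / real r * (w j / real r) * S i t j t' p)
            = (\<Sum>t=1..r. \<Sum>j=1..m. w i / real r * (w j / real r) * s i j p * (real r - al))"
        proof (rule sum.cong[OF refl], rule sum.cong[OF refl])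
          fix t j assume t: "t \<in> {1..r}" and j: "j \<in> {1..m}"
          have "(\<Sum>t'=1..r. w i / real r * (w j / real r) * S i t j t' p)
              = (\<Sum>t'=1..r. (w i / real r * (w j / real r) * s i j p) * (if t = t' then 1 - al else 1))"
            using t True by (intro sum.cong refl) (auto simp: S_def s0_def)
          also have "\<dots> = (w i / real r * (w j / real r) * s i j p) * (\<Sum>t'=1..r. if t = t' then 1 - al else 1)"
            by (rule sum_distrib_left[symmetric])
          also have "\<dots> = w i / real r * (w j / real r) * s i j p * (real r - al)"
            using row_const[OF t, of al] by simp
          finally show "(\<Sum>t'=1..r. w i / real r * (w j / real r) * S i t j t' p)
              = w i / real r * (w j / real r) * s i j p * (real r - al)" .
        qed
        also have "\<dots> = real r * (\<Sum>j=1..m. w i / real r * (w j / real r) * s i j p * (real r - al))"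
          by simp
        also have "\<dots> = (\<Sum>j=1..m. w i * w j * s i j p * ((real r - al) / real r))"
          unfolding sum_distrib_left using r by (intro sum.cong refl) (rule aux1, simp)
        finally show "(\<Sum>t=1..r. \<Sum>j=1..m. \<Sum>t'=1..r. w i / real r * (w j / real r) * S i t j t' p)
            = (\<Sum>j=1..m. w i * w j * s i j p * ((real r - al) / real r))" .
      qed
      also have "\<dots> = (\<Sum>i=1..m. \<Sum>j=1..m. w i * w j * s i j p) * ((real r - al) / real r)"
        by (simp only: sum_distrib_right)
      also have "\<dots> = 1 / real n * ((real r - al) / real r)" using balp[OF pn] by simp
      also have "\<dots> = 1 / real (n + r)"
      proof -
        have pos: "real (n+r) > 0" "real r > 0" "real n > 0" using n r by auto
        have "real r - al = real r * real n / real (n + r)"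
          unfolding al_def using pos by (simp add: field_simps power2_eq_square)
        then have "(real r - al) / real r = real n / real (n + r)" using pos by simp
        then show ?thesis using pos by simp
      qed
      finally show ?thesis using eq by simp
    next
      case False
      define t0 where "t0 = p - n"
      have t0: "t0 \<in> {1..r}" "p = n + t0" using p False unfolding t0_def by auto
      have "(\<Sum>i=1..m. \<Sum>t=1..r. \<Sum>j=1..m. \<Sum>t'=1..r. w i / real r * (w j / real r) * S i t j t' p)
          = (\<Sum>i=1..m. w i * (al / (real r * real r)))"
      proof (rule sum.cong[OF refl])
        fix i assume i: "i \<in> {1..m}"
        have "(\<Sum>t=1..r. \<Sum>j=1..m. \<Sum>t'=1..r. w i / real r * (w j / real r) * S i t j t' p)
            = (\<Sum>t=1..r. if t = t0 then w i * (al / (real r * real r)) else 0)"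
        proof (rule sum.cong[OF refl])
          fix t assume t: "t \<in> {1..r}"
          have "(\<Sum>j=1..m. \<Sum>t'=1..r. w i / real r * (w j / real r) * S i t j t' p)
              = (\<Sum>j=1..m. if t = t0 then w i / real r * (w j / real r) * al else 0)"
          proof (rule sum.cong[OF refl])
            fix j assume j: "j \<in> {1..m}"
            have "(\<Sum>t'=1..r. w i / real r * (w j / real r) * S i t j t' p)
                = (\<Sum>t'=1..r. if t' = t then (if t = t0 then w i / real r * (w j / real r) * al else 0) else 0)"
              using t0 False by (intro sum.cong refl) (auto simp: S_def s0_def)
            also have "\<dots> = (if t = t0 then w i / real r * (w j / real r) * al else 0)"
              using t by (simp add: sum.delta)
            finally show "(\<Sum>t'=1..r. w i / real r * (w j / real r) * S i t j t' p)
                = (if t = t0 then w i / real r * (w j / real r) * al else 0)" .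
          qed
          also have "\<dots> = (if t = t0 then w i * (al / (real r * real r)) else 0)"
          proof (cases "t = t0")
            case True
            have "(\<Sum>j=1..m. w i / real r * (w j / real r) * al)
                = (w i * (al / (real r * real r))) * (\<Sum>j=1..m. w j)"
              unfolding sum_distrib_left by (intro sum.cong refl) (rule aux2)
            then show ?thesis using True wsum by simp
          qed simp
          finally show "(\<Sum>j=1..m. \<Sum>t'=1..r. w i / real r * (w j / real r) * S i t j t' p)
              = (if t = t0 then w i * (al / (real r * real r)) else 0)" .
        qed
        also have "\<dots> = w i * (al / (real r * real r))"
          using t0 by (simp add: sum.delta')
        finally show "(\<Sum>t=1..r. \<Sum>j=1..m. \<Sum>t'=1..r. w i / real r * (w j / real r) * S i t j t' p)
            = w i * (al / (real r * real r))" .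
      qed
      also have "\<dots> = (\<Sum>i=1..m. w i) * (al / (real r * real r))"
        by (simp only: sum_distrib_right)
      also have "\<dots> = al / (real r * real r)"
        using wsum by simp
      also have "\<dots> = 1 / real (n + r)"
        using r unfolding al_def by (simp add: power2_eq_square)
      finally show ?thesis using eq by simp
    qed
  qed
  have card: "cardinality (m*r) F' = cardinality m F + 1"
  proof -
    have img: "(\<lambda>a. card (F' a)) ` {1..m*r} = (\<lambda>x. x + 1) ` ((\<lambda>i. card (F i)) ` {1..m})"
    proof
      show "(\<lambda>a. card (F' a)) ` {1..m*r} \<subseteq> (\<lambda>x. x + 1) ` ((\<lambda>i. card (F i)) ` {1..m})"
      proof
        fix y assume "y \<in> (\<lambda>a. card (F' a)) ` {1..m*r}"
        then obtain a where a: "a \<in> {1..m*r}" and y: "y = card (F' a)" by auto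
        have fin: "finite (F (I a))" using Fsub ITr[OF a] finite_subset by blast
        have "F (I a) \<subseteq> {1..n}" using Fsub ITr[OF a] by blast
        then have "n + T a \<notin> F (I a)" using ITr[OF a] by auto
        then have "card (F' a) = card (F (I a)) + 1" unfolding F'_def using fin by simp
        then show "y \<in> (\<lambda>x. x + 1) ` ((\<lambda>i. card (F i)) ` {1..m})" using y ITr[OF a] by auto
      qed
    next
      show "(\<lambda>x. x + 1) ` ((\<lambda>i. card (F i)) ` {1..m}) \<subseteq> (\<lambda>a. card (F' a)) ` {1..m*r}"
      proof
        fix y assume "y \<in> (\<lambda>x. x + 1) ` ((\<lambda>i. card (F i)) ` {1..m})"
        then obtain i where i: "i \<in> {1..m}" and y: "y = card (F i) + 1" by auto
        define a where "a = (i-1)*r + 1"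
        have Ia: "I a = i" "T a = 1" unfolding a_def I_def T_def using IT[OF r, of 1 i] i r by auto
        have "(i-1)*r + r = i * r" using i by (cases i) auto
        moreover have "i * r \<le> m * r" using i by simp
        ultimately have "(i-1)*r + r \<le> m * r" by simp
        then have a: "a \<in> {1..m*r}" unfolding a_def using r by auto
        have fin: "finite (F i)" using Fsub i finite_subset by blast
        have "F i \<subseteq> {1..n}" using Fsub i by blast
        then have "n + 1 \<notin> F i" by auto
        then have "card (F' a) = card (F i) + 1" unfolding F'_def Ia using fin by simp
        then show "y \<in> (\<lambda>a. card (F' a)) ` {1..m*r}" using y a by (metis image_eqI)
      qed
    qed
    have "Max ((\<lambda>x. x + 1) ` ((\<lambda>i. card (F i)) ` {1..m})) = Max ((\<lambda>i. card (F i)) ` {1..m}) + 1"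
      by (rule mono_Max_commute[symmetric]) (use m1 in \<open>auto simp: mono_def\<close>)
    then show ?thesis unfolding cardinality_def img by simp
  qed
  have "is_system (n+r) (m*r) F' w' s' \<and> intersecting (n+r) (m*r) F' s' \<and>
           balanced (n+r) (m*r) w' s' \<and> cardinality (m*r) F' = cardinality m F + 1"
    using issys isint isbal card by (intro conjI)
  then show ?thesis by (intro exI)
qed

theorem lemma3:
  fixes n r :: nat
  assumes "0 < n" and "0 < r" and "r ^ 2 \<le> n + r"
  shows "kfun (n + r) \<le> kfun n + 1"
proof -
  obtain m F w s where sys: "is_system n m F w s" "intersecting n m F s" "balanced n m w s"
    and k: "cardinality m F = kfun n"
    using kfun_attained[OF assms(1)] by blast
  obtain m' F' w' s' where sys': "is_system (n+r) m' F' w' s'" "intersecting (n+r) m' F' s'"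
      "balanced (n+r) m' w' s'" and k': "cardinality m' F' = cardinality m F + 1"
    using extend[OF assms sys] by blast
  have "is_system (n+r) m' F' w' s' \<and> intersecting (n+r) m' F' s' \<and>
      balanced (n+r) m' w' s' \<and> cardinality m' F' = kfun n + 1"
    using sys' k' k by (intro conjI) simp_all
  then have "\<exists>m F w s. is_system (n+r) m F w s \<and> intersecting (n+r) m F s \<and>
      balanced (n+r) m w s \<and> cardinality m F = kfun n + 1" by (intro exI)
  then show ?thesis unfolding kfun_def[of "n+r"] by (rule Least_le)
qed

end
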